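(* Let $k\ge0$, $p\in[0,1]$, and fix sequences $\xi^x,\xi^y$. (i) Let $i_0\le i_1$ and $j$ be integers such that $H^y_{(k,j)}=0$ and $\sum_{i=i_0}^{i_1}H^x_{(k,i)}\le1$, and let $I=\bigcup_{i=i_0}^{i_1}I_{(k,i)}$. Then for every $k$-fractal set $S\subseteq I^y_{(k,j)}$, $$\mathbb{P}^{\xi^x,\xi^y}_p\big[\mathcal{R}_k(S,I)\text{ contains no }k\text{-fractal set}\big]\le(i_1-i_0+1)\max\{u_k(p),v_k(p)\}.$$ (ii) If $i_1-i_0\ge1$, $\sum_{i=i_0}^{i_1}H^x_{(k,i)}\le1$, $I=\bigcup_{i=i_0}^{i_1}I_{(k,i)}$ and $S$ is any $k$-fractal set (not necessarily $k$-grouped), then $$\mathbb{P}^{\xi^x,\xi^y}_p\big[\mathcal{R}_k(S,I)\text{ contains no }k\text{-grouped }k\text{-fractal set}\big]\le(i_1-i_0+1)\max\{u_k(p),v_k(p)\}.$$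
   Context: $L=10^6$, $L_k=L^k$, $M_k=\{k\}\times\mathbb{Z}$, $I_{(k,i)}=[iL_k,(i+1)L_k)\cap\mathbb{Z}$; for $m=(k+1,i)$, $\mathcal{Q}_m=\{(k,iL+j):0\le j\le L-1\}$. For a sequence $\xi=(\xi_i)_{i\in\mathbb{Z}}$ of nonnegative integers define labels $H_m$: $H_{(0,i)}=\xi_i$; for $m\in M_{k+1}$, $H_m=0$ if all $m'\in\mathcal{Q}_m$ are good, $H_m=H_{m_1}-1$ if $m_1$ is the unique bad element of $\mathcal{Q}_m$, and $H_m=1+\sum_{i=1}^rH_{m_i}$ if $m_1,\dots,m_r$ ($r\ge2$) are the bad elements of $\mathcal{Q}_m$; $m$ is good iff $H_m=0$, bad otherwise. $H^x_m,H^y_m$ are these labels computed from $\xi^x$, $\xi^y$; $I^x_m,I^y_m$ denote $I_m$ viewed horizontally/vertically. $\mathbb{P}^{\xi^x,\xi^y}_p$: independent bond percolation on $\mathbb{Z}^2$, edge $\{(i,j),(i+1,j)\}$ open with probability $p^{\xi^x_i+1}$, edge $\{(i,j),(i,j+1)\}$ open with probability $p^{\xi^y_j+1}$. For $S\subseteq\mathbb{Z}$, $Z_k(S)=\{m\in M_k:I_m\cap S\neq\emptyset\}$; $Z\prec Z'$ means $(k,i)\in Z,(k,j)\in Z'\Rightarrow i<j$; $S_1,\dots,S_n$ is $k$-ordered if $Z_k(S_1)\prec\dots\prec Z_k(S_n)$. $S$ is $k$-good if all $m\in Z_k(S)$ have $H^y_m=0$. $\{i\}$ is $0$-fractal iff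 $\xi^y_i=0$; for $k\ge1$, $S$ is $k$-fractal if $S=S_1\cup\dots\cup S_{2^{10}}$ with $S$ $k$-good, $(S_1,\dots,S_{2^{10}})$ $(k-1)$-ordered and each $S_i$ $(k-1)$-fractal. A $k$-fractal $S$ is $k$-grouped if $S\subseteq I_m$ for some $m\in M_k$. For a rectangle $R=[a,b)\times[c,d)$ (vertices $[a,b]\times[c,d]\cap\mathbb{Z}^2$, edges $\{z,w\}$, $|z-w|=1$, $z\in[a,b]\times[c,d]$, $w\in[a,b)\times[c,d)$), $\mathcal{R}(S,R)$ is the set of $y$ with $(b,y)\in\{b\}\times[c,d]$ joined to $\{a\}\times S$ by an open path in $R$. For a finite interval $I=[a,b)$, $\mathcal{R}_k(S,I)=\bigcup_{m'\in Z_k(S)}\mathcal{R}(S\cap I^y_{m'},I\times I^y_{m'})$. $u_k(p)=\sup\mathbb{P}^{\xi^x,\xi^y}_p[\mathcal{R}_k(S,I^x_m)$ contains no $k$-grouped $k$-fractal set$]$ over $S,m\in M_k,\xi^x,\xi^y$ with $S$ $k$-fractal and $H^x_m=0$. $v_k(p)=\sup\mathbb{P}^{\xi^x,\xi^y}_p[\mathcal{R}_k(S,I^x_m)$ contains no $k$-fractal set$]$ over $h\ge1$, $S$, $m\in M_k$, $\xi^x,\xi^y$ with $H^x_m=h$ and $S$ the union of a $k$-ordered family of $2^{4(h-1)}$ $k$-fractal sets. *)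

theory Defs
  imports "HOL-Probability.Probability"
begin

definition LL :: int where "LL = 10^6"

definition Iv :: "nat \<Rightarrow> int \<Rightarrow> int set" where
  "Iv k i = {i * LL^k ..< (i+1) * LL^k}"

text \<open>Labels H_(k,i) computed from a sequence xi; good iff label is 0.\<close>
fun H :: "(int \<Rightarrow> nat) \<Rightarrow> nat \<Rightarrow> int \<Rightarrow> nat" where
  "H xi 0 i = xi i"
| "H xi (Suc k) i =
     (let bad = {j \<in> {0..<LL}. H xi k (i * LL + j) \<noteq> 0} in
      if bad = {} then 0
      else if card bad = 1 then H xi k (i * LL + the_elem bad) - 1
      else 1 + (\<Sum>j\<in>bad. H xi k (i * LL + j)))"

definition Zk :: "nat \<Rightarrow> int set \<Rightarrow> int set" where
  "Zk k S = {i. Iv k i \<inter> S \<noteq> {}}"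

definition prec :: "int set \<Rightarrow> int set \<Rightarrow> bool" where
  "prec Z Z' \<longleftrightarrow> (\<forall>i\<in>Z. \<forall>j\<in>Z'. i < j)"

definition k_ordered :: "nat \<Rightarrow> int set list \<Rightarrow> bool" where
  "k_ordered k Ss \<longleftrightarrow> (\<forall>a. Suc a < length Ss \<longrightarrow> prec (Zk k (Ss ! a)) (Zk k (Ss ! Suc a)))"

definition k_good :: "(int \<Rightarrow> nat) \<Rightarrow> nat \<Rightarrow> int set \<Rightarrow> bool" where
  "k_good xiy k S \<longleftrightarrow> (\<forall>m\<in>Zk k S. H xiy k m = 0)"

primrec fractal :: "(int \<Rightarrow> nat) \<Rightarrow> nat \<Rightarrow> int set \<Rightarrow> bool" where
  "fractal xiy 0 S \<longleftrightarrow> (\<exists>i. S = {i} \<and> xiy i = 0)"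
| "fractal xiy (Suc k) S \<longleftrightarrow>
     (\<exists>Ss. length Ss = 2^10 \<and> S = \<Union>(set Ss) \<and> k_good xiy (Suc k) S
          \<and> k_ordered k Ss \<and> (\<forall>T\<in>set Ss. fractal xiy k T))"

definition grouped :: "nat \<Rightarrow> int set \<Rightarrow> bool" where
  "grouped k S \<longleftrightarrow> (\<exists>i. S \<subseteq> Iv k i)"

type_synonym edge = "(int \<times> int) \<times> bool"

fun endpoints :: "edge \<Rightarrow> (int \<times> int) set" where
  "endpoints ((x,y),True) = {(x,y),(x+1,y)}"
| "endpoints ((x,y),False) = {(x,y),(x,y+1)}"

fun edge_prob :: "(int \<Rightarrow> nat) \<Rightarrow> (int \<Rightarrow> nat) \<Rightarrow> real \<Rightarrow> edge \<Rightarrow> real" where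
  "edge_prob xix xiy p ((x,y),True) = p ^ (xix x + 1)"
| "edge_prob xix xiy p ((x,y),False) = p ^ (xiy y + 1)"

text \<open>Independent bond percolation: configuration \<omega> :: edge \<Rightarrow> bool (True = open).\<close>
definition perc :: "(int \<Rightarrow> nat) \<Rightarrow> (int \<Rightarrow> nat) \<Rightarrow> real \<Rightarrow> (edge \<Rightarrow> bool) measure" where
  "perc xix xiy p = (\<Pi>\<^sub>M e\<in>UNIV. measure_pmf (bernoulli_pmf (edge_prob xix xiy p e)))"

definition Pperc :: "(int \<Rightarrow> nat) \<Rightarrow> (int \<Rightarrow> nat) \<Rightarrow> real \<Rightarrow> ((edge \<Rightarrow> bool) \<Rightarrow> bool) \<Rightarrow> real" where
  "Pperc xix xiy p E = measure (perc xix xiy p) {\<omega> \<in> space (perc xix xiy p). E \<omega>}"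

definition edge_in_rect :: "int \<Rightarrow> int \<Rightarrow> int \<Rightarrow> int \<Rightarrow> edge \<Rightarrow> bool" where
  "edge_in_rect a b c d e \<longleftrightarrow>
     (\<exists>z w. endpoints e = {z, w} \<and> fst z \<in> {a..b} \<and> snd z \<in> {c..d}
            \<and> fst w \<in> {a..<b} \<and> snd w \<in> {c..<d})"

definition open_step :: "(edge \<Rightarrow> bool) \<Rightarrow> int \<Rightarrow> int \<Rightarrow> int \<Rightarrow> int \<Rightarrow> int \<times> int \<Rightarrow> int \<times> int \<Rightarrow> bool" where
  "open_step \<omega> a b c d u v \<longleftrightarrow> (\<exists>e. \<omega> e \<and> edge_in_rect a b c d e \<and> endpoints e = {u, v})"

definition Rset :: "(edge \<Rightarrow> bool) \<Rightarrow> int set \<Rightarrow> int \<Rightarrow> int \<Rightarrow> int \<Rightarrow> int \<Rightarrow> int set" where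
  "Rset \<omega> S a b c d = {y \<in> {c..d}. \<exists>s\<in>S. (open_step \<omega> a b c d)\<^sup>*\<^sup>* (a, s) (b, y)}"

definition Rk :: "(edge \<Rightarrow> bool) \<Rightarrow> nat \<Rightarrow> int set \<Rightarrow> int \<Rightarrow> int \<Rightarrow> int set" where
  "Rk \<omega> k S a b = (\<Union>j\<in>Zk k S. Rset \<omega> (S \<inter> Iv k j) a b (j * LL^k) ((j+1) * LL^k))"

definition u :: "nat \<Rightarrow> real \<Rightarrow> real" where
  "u k p = Sup {Pperc xix xiy p (\<lambda>\<omega>. \<not> (\<exists>T. T \<subseteq> Rk \<omega> k S (i * LL^k) ((i+1) * LL^k)
                                          \<and> grouped k T \<and> fractal xiy k T))
               | xix xiy S i. fractal xiy k S \<and> H xix k i = 0}"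

definition v :: "nat \<Rightarrow> real \<Rightarrow> real" where
  "v k p = Sup {Pperc xix xiy p (\<lambda>\<omega>. \<not> (\<exists>T. T \<subseteq> Rk \<omega> k S (i * LL^k) ((i+1) * LL^k)
                                          \<and> fractal xiy k T))
               | xix xiy S i h Ss. h \<ge> 1 \<and> H xix k i = h \<and> length Ss = 2^(4*(h-1))
                   \<and> k_ordered k Ss \<and> (\<forall>T\<in>set Ss. fractal xiy k T) \<and> S = \<Union>(set Ss)}"

end

theory Submission
  imports Defs
begin

lemma fin_sets_PiM:
  fixes q :: "'e \<Rightarrow> bool pmf"
  assumes J: "finite J" and A: "A \<subseteq> space (PiM J (\<lambda>e. measure_pmf (q e)))"
  shows "A \<in> sets (PiM J (\<lambda>e. measure_pmf (q e)))"
proof -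
  have sp: "space (PiM J (\<lambda>e. measure_pmf (q e))) = PiE J (\<lambda>_. UNIV)"
    by (simp add: space_PiM)
  have fin: "finite A" proof (rule finite_subset)
    show "A \<subseteq> PiE J (\<lambda>_. UNIV :: bool set)" using A unfolding sp .
    show "finite (PiE J (\<lambda>_. UNIV :: bool set))" using J by (intro finite_PiE) auto
  qed
  have eq: "A = (\<Union>f\<in>A. PiE J (\<lambda>e. {f e}))"
  proof -
    have "PiE J (\<lambda>e. {f e}) = {f}" if "f \<in> A" for f
      using that A unfolding sp by (auto simp: PiE_iff extensional_def fun_eq_iff)
    then show ?thesis by auto
  qed
  have "(\<Union>f\<in>A. PiE J (\<lambda>e. {f e})) \<in> sets (PiM J (\<lambda>e. measure_pmf (q e)))"
    using fin by (intro sets.finite_UN sets_PiM_I_finite J) auto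
  then show ?thesis using eq by simp
qed

lemma dep_meas:
  fixes q :: "'e \<Rightarrow> bool pmf"
  assumes J: "finite J" and dep: "\<And>\<omega> \<omega>'. (\<And>e. e \<in> J \<Longrightarrow> \<omega> e = \<omega>' e) \<Longrightarrow> E \<omega> = E \<omega>'"
  shows "{\<omega> \<in> space (PiM UNIV (\<lambda>e. measure_pmf (q e))). E \<omega>} \<in> sets (PiM UNIV (\<lambda>e. measure_pmf (q e)))"
proof -
  let ?M = "PiM UNIV (\<lambda>e. measure_pmf (q e))"
  let ?N = "PiM J (\<lambda>e. measure_pmf (q e))"
  define A where "A = {f \<in> space ?N. E (\<lambda>e. if e \<in> J then f e else False)}"
  have "A \<in> sets ?N" unfolding A_def by (rule fin_sets_PiM[OF J]) auto
  moreover have "(\<lambda>\<omega>. restrict \<omega> J) \<in> measurable ?M ?N"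
    by (rule measurable_restrict_subset) auto
  ultimately have "(\<lambda>\<omega>. restrict \<omega> J) -` A \<inter> space ?M \<in> sets ?M"
    by (rule measurable_sets[rotated])
  moreover have "(\<lambda>\<omega>. restrict \<omega> J) -` A \<inter> space ?M = {\<omega> \<in> space ?M. E \<omega>}"
  proof -
    have "E (\<lambda>e. if e \<in> J then restrict \<omega> J e else False) = E \<omega>" for \<omega>
      by (rule dep) auto
    then show ?thesis unfolding A_def by (auto simp: space_PiM)
  qed
  ultimately show ?thesis by simp
qed

lemma indep_coords:
  fixes q :: "'e \<Rightarrow> bool pmf"
  shows "prob_space.indep_vars (PiM UNIV (\<lambda>e. measure_pmf (q e))) (\<lambda>e. measure_pmf (q e)) (\<lambda>e \<omega>. \<omega> e) UNIV"
proof -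
  let ?M = "PiM UNIV (\<lambda>e. measure_pmf (q e))"
  interpret product_prob_space "\<lambda>e. measure_pmf (q e)" UNIV
    by unfold_locales
  interpret P: prob_space ?M by (rule prob_space_PiM) (rule prob_space_measure_pmf)
  show ?thesis
  proof (subst P.indep_vars_iff_distr_eq_PiM')
    show "distr ?M (\<Pi>\<^sub>M i\<in>UNIV. measure_pmf (q i)) (\<lambda>x. \<lambda>i\<in>UNIV. x i) =
      (\<Pi>\<^sub>M i\<in>UNIV. distr ?M (measure_pmf (q i)) (\<lambda>\<omega>. \<omega> i))"
    proof -
      have "distr ?M ?M (\<lambda>x. \<lambda>i\<in>UNIV. x i) = ?M"
        unfolding restrict_UNIV by (rule distr_id2) simp
      moreover have "(\<Pi>\<^sub>M i\<in>UNIV. distr ?M (measure_pmf (q i)) (\<lambda>\<omega>. \<omega> i)) = ?M"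
        by (rule PiM_cong) (auto simp: PiM_component)
      ultimately show ?thesis by simp
    qed
  qed (auto intro: measurable_component_singleton)
qed

lemma dep_indep:
  fixes q :: "'e \<Rightarrow> bool pmf"
  assumes J1: "finite J1" and J2: "finite J2" and disj: "J1 \<inter> J2 = {}"
    and dep1: "\<And>\<omega> \<omega>'. (\<And>e. e \<in> J1 \<Longrightarrow> \<omega> e = \<omega>' e) \<Longrightarrow> E1 \<omega> = E1 \<omega>'"
    and dep2: "\<And>\<omega> \<omega>'. (\<And>e. e \<in> J2 \<Longrightarrow> \<omega> e = \<omega>' e) \<Longrightarrow> E2 \<omega> = E2 \<omega>'"
  shows "measure (PiM UNIV (\<lambda>e. measure_pmf (q e))) {\<omega> \<in> space (PiM UNIV (\<lambda>e. measure_pmf (q e))). E1 \<omega> \<and> E2 \<omega>}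
       = measure (PiM UNIV (\<lambda>e. measure_pmf (q e))) {\<omega> \<in> space (PiM UNIV (\<lambda>e. measure_pmf (q e))). E1 \<omega>}
         * measure (PiM UNIV (\<lambda>e. measure_pmf (q e))) {\<omega> \<in> space (PiM UNIV (\<lambda>e. measure_pmf (q e))). E2 \<omega>}"
proof -
  let ?M = "PiM UNIV (\<lambda>e. measure_pmf (q e))"
  interpret P: prob_space ?M by (rule prob_space_PiM) (rule prob_space_measure_pmf)
  have iv: "P.indep_var (PiM J1 (\<lambda>e. measure_pmf (q e))) (\<lambda>\<omega>. restrict (\<lambda>i. \<omega> i) J1)
                        (PiM J2 (\<lambda>e. measure_pmf (q e))) (\<lambda>\<omega>. restrict (\<lambda>i. \<omega> i) J2)"
    by (rule P.indep_var_restrict[OF indep_coords]) (use disj in auto)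
  then have is2: "P.indep_set
      (sigma_sets (space ?M) {(\<lambda>\<omega>. restrict (\<lambda>i. \<omega> i) J1) -` A \<inter> space ?M | A. A \<in> sets (PiM J1 (\<lambda>e. measure_pmf (q e)))})
      (sigma_sets (space ?M) {(\<lambda>\<omega>. restrict (\<lambda>i. \<omega> i) J2) -` A \<inter> space ?M | A. A \<in> sets (PiM J2 (\<lambda>e. measure_pmf (q e)))})"
    unfolding P.indep_var_eq by blast
  define A1 where "A1 = {f \<in> space (PiM J1 (\<lambda>e. measure_pmf (q e))). E1 (\<lambda>e. if e \<in> J1 then f e else False)}"
  define A2 where "A2 = {f \<in> space (PiM J2 (\<lambda>e. measure_pmf (q e))). E2 (\<lambda>e. if e \<in> J2 then f e else False)}"
  have A1s: "A1 \<in> sets (PiM J1 (\<lambda>e. measure_pmf (q e)))" unfolding A1_def by (rule fin_sets_PiM[OF J1]) auto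
  have A2s: "A2 \<in> sets (PiM J2 (\<lambda>e. measure_pmf (q e)))" unfolding A2_def by (rule fin_sets_PiM[OF J2]) auto
  have e1: "(\<lambda>\<omega>. restrict (\<lambda>i. \<omega> i) J1) -` A1 \<inter> space ?M = {\<omega> \<in> space ?M. E1 \<omega>}"
  proof -
    have "E1 (\<lambda>e. if e \<in> J1 then restrict \<omega> J1 e else False) = E1 \<omega>" for \<omega>
      by (rule dep1) auto
    then show ?thesis unfolding A1_def by (auto simp: space_PiM)
  qed
  have e2: "(\<lambda>\<omega>. restrict (\<lambda>i. \<omega> i) J2) -` A2 \<inter> space ?M = {\<omega> \<in> space ?M. E2 \<omega>}"
  proof -
    have "E2 (\<lambda>e. if e \<in> J2 then restrict \<omega> J2 e else False) = E2 \<omega>" for \<omega>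
      by (rule dep2) auto
    then show ?thesis unfolding A2_def by (auto simp: space_PiM)
  qed
  have "{\<omega> \<in> space ?M. E1 \<omega>} \<in> sigma_sets (space ?M) {(\<lambda>\<omega>. restrict (\<lambda>i. \<omega> i) J1) -` A \<inter> space ?M | A. A \<in> sets (PiM J1 (\<lambda>e. measure_pmf (q e)))}"
    using A1s e1 by (intro sigma_sets.Basic) blast
  moreover have "{\<omega> \<in> space ?M. E2 \<omega>} \<in> sigma_sets (space ?M) {(\<lambda>\<omega>. restrict (\<lambda>i. \<omega> i) J2) -` A \<inter> space ?M | A. A \<in> sets (PiM J2 (\<lambda>e. measure_pmf (q e)))}"
    using A2s e2 by (intro sigma_sets.Basic) blast
  ultimately have "P.prob ({\<omega> \<in> space ?M. E1 \<omega>} \<inter> {\<omega> \<in> space ?M. E2 \<omega>}) = P.prob {\<omega> \<in> space ?M. E1 \<omega>} * P.prob {\<omega> \<in> space ?M. E2 \<omega>}"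
    using is2 unfolding P.indep_sets2_eq by blast
  moreover have "{\<omega> \<in> space ?M. E1 \<omega>} \<inter> {\<omega> \<in> space ?M. E2 \<omega>} = {\<omega> \<in> space ?M. E1 \<omega> \<and> E2 \<omega>}" by auto
  ultimately show ?thesis by simp
qed


lemma perc_prob: "prob_space (perc xix xiy p)"
  unfolding perc_def by (rule prob_space_PiM) (rule prob_space_measure_pmf)

lemma perc_meas:
  assumes "finite J" and "\<And>\<omega> \<omega>'. (\<And>e. e \<in> J \<Longrightarrow> \<omega> e = \<omega>' e) \<Longrightarrow> E \<omega> = E \<omega>'"
  shows "{\<omega> \<in> space (perc xix xiy p). E \<omega>} \<in> sets (perc xix xiy p)"
  unfolding perc_def by (rule dep_meas[where q="\<lambda>e. bernoulli_pmf (edge_prob xix xiy p e)", OF assms])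

lemma perc_indep:
  assumes J1: "finite J1" and J2: "finite J2" and disj: "J1 \<inter> J2 = {}"
    and dep1: "\<And>\<omega> \<omega>'. (\<And>e. e \<in> J1 \<Longrightarrow> \<omega> e = \<omega>' e) \<Longrightarrow> E1 \<omega> = E1 \<omega>'"
    and dep2: "\<And>\<omega> \<omega>'. (\<And>e. e \<in> J2 \<Longrightarrow> \<omega> e = \<omega>' e) \<Longrightarrow> E2 \<omega> = E2 \<omega>'"
  shows "Pperc xix xiy p (\<lambda>\<omega>. E1 \<omega> \<and> E2 \<omega>) = Pperc xix xiy p E1 * Pperc xix xiy p E2"
  unfolding Pperc_def perc_def
  by (rule dep_indep[where q="\<lambda>e. bernoulli_pmf (edge_prob xix xiy p e)", OF assms])

lemma Pperc_le1: "Pperc xix xiy p E \<le> 1"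
  unfolding Pperc_def using prob_space.prob_le_1[OF perc_prob] by blast

lemma Pperc_ge0: "0 \<le> Pperc xix xiy p E"
  unfolding Pperc_def by simp



lemma LLk_pos: "(0::int) < LL^k" by (simp add: LL_def)

lemma Iv_iff: "s \<in> Iv k i \<longleftrightarrow> s div LL^k = i"
proof -
  have L: "(0::int) < LL^k" by (rule LLk_pos)
  show ?thesis
  proof
    assume "s \<in> Iv k i"
    then have "i * LL^k \<le> s" "s < (i+1) * LL^k" by (auto simp: Iv_def)
    then show "s div LL^k = i"
      by (intro int_div_pos_eq[of s "LL^k" i "s - LL^k * i"]) (auto simp: algebra_simps)
  next
    assume a: "s div LL^k = i"
    have "s div LL^k * LL^k + s mod LL^k = s" by (rule div_mult_mod_eq)
    moreover have "0 \<le> s mod LL^k" "s mod LL^k < LL^k" using L by auto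
    ultimately show "s \<in> Iv k i" unfolding Iv_def using a by (auto simp: algebra_simps)
  qed
qed

lemma Iv_unique: "s \<in> Iv k i \<Longrightarrow> s \<in> Iv k j \<Longrightarrow> i = j"
  by (simp add: Iv_iff)

lemma Zk_eq: "Zk k S = (\<lambda>s. s div LL^k) ` S"
  unfolding Zk_def by (auto simp: Iv_iff)

lemma finite_Zk: "finite S \<Longrightarrow> finite (Zk k S)"
  by (simp add: Zk_eq)

lemma Zk_sub: "T \<subseteq> \<Union>(Iv k ` Z) \<Longrightarrow> Zk k T \<subseteq> Z"
  unfolding Zk_def using Iv_unique by blast

lemma self_sub: "S \<subseteq> \<Union>(Iv k ` Zk k S)"
proof
  fix x assume x: "x \<in> S"
  have "x \<in> Iv k (x div LL^k)" by (simp add: Iv_iff)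
  with x show "x \<in> \<Union>(Iv k ` Zk k S)" unfolding Zk_def by blast
qed

lemma edge_box: "edge_in_rect a b c d ((x,y),dir) \<Longrightarrow> x \<in> {a..b} \<and> y \<in> {c..d}"
  by (cases dir) (auto simp: edge_in_rect_def doubleton_eq_iff)

lemma edge_x: "edge_in_rect a b c d ((x,y),dir) \<Longrightarrow> a \<le> x \<and> x < b"
  by (cases dir) (auto simp: edge_in_rect_def doubleton_eq_iff)

lemma edge_corner: "edge_in_rect a b c d e \<Longrightarrow> (b,d) \<notin> endpoints e"
proof -
  assume h: "edge_in_rect a b c d e"
  obtain x y dir where e: "e = ((x,y),dir)" by (metis prod.collapse)
  show ?thesis using h unfolding e by (cases dir) (auto simp: edge_in_rect_def doubleton_eq_iff)
qed

lemma edge_mono: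
  assumes h: "edge_in_rect a b c d e" and a: "a' \<le> a" and b: "b \<le> b'"
  shows "edge_in_rect a' b' c d e"
proof -
  from h obtain z w where zw: "endpoints e = {z, w}" "fst z \<in> {a..b}" "snd z \<in> {c..d}"
            "fst w \<in> {a..<b}" "snd w \<in> {c..<d}"
    unfolding edge_in_rect_def by blast
  show ?thesis unfolding edge_in_rect_def
    by (rule exI[of _ z], rule exI[of _ w]) (use zw a b in auto)
qed

lemma edge_fin: "finite {e. edge_in_rect a b c d e}"
proof (rule finite_subset)
  show "{e. edge_in_rect a b c d e} \<subseteq> ({a..b} \<times> {c..d}) \<times> UNIV"
    using edge_box by fastforce
  show "finite (({a..b} \<times> {c..d}) \<times> (UNIV :: bool set))" by auto
qed

lemma path_mono:
  assumes "(open_step \<omega> a b c d)\<^sup>*\<^sup>* x y" "a' \<le> a" "b \<le> b'"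
  shows "(open_step \<omega> a' b' c d)\<^sup>*\<^sup>* x y"
  using assms(1)
proof (induction rule: rtranclp_induct)
  case base then show ?case by simp
next
  case (step y z)
  then have "open_step \<omega> a' b' c d y z"
    unfolding open_step_def using edge_mono assms(2,3) by blast
  with step show ?case by (simp add: rtranclp.rtrancl_into_rtrancl)
qed

lemma Rset_range:
  assumes y: "y \<in> Rset \<omega> S' a b c d" and S': "S' \<subseteq> {..<d}"
  shows "c \<le> y \<and> y < d"
proof -
  from y obtain s where s: "s \<in> S'" and yr: "y \<in> {c..d}" and pth: "(open_step \<omega> a b c d)\<^sup>*\<^sup>* (a, s) (b, y)"
    unfolding Rset_def by blast
  have "y \<noteq> d"
  proof
    assume yd: "y = d"
    from pth show False
    proof (cases rule: rtranclp.cases)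
      case rtrancl_refl
      then show False using s S' yd by auto
    next
      case (rtrancl_into_rtrancl z)
      then obtain e where e1: "edge_in_rect a b c d e" and e2: "endpoints e = {z, (b, y)}"
        unfolding open_step_def by blast
      have "(b, d) \<notin> endpoints e" by (rule edge_corner[OF e1])
      then show False using e2 yd by auto
    qed
  qed
  then show ?thesis using yr by auto
qed

lemma Rk_sub: "Rk \<omega> k T a b \<subseteq> \<Union>(Iv k ` Zk k T)"
proof
  fix y assume "y \<in> Rk \<omega> k T a b"
  then obtain j where j: "j \<in> Zk k T" and y: "y \<in> Rset \<omega> (T \<inter> Iv k j) a b (j * LL^k) ((j+1) * LL^k)"
    unfolding Rk_def by blast
  have "T \<inter> Iv k j \<subseteq> {..<(j+1) * LL^k}" by (auto simp: Iv_def)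
  from Rset_range[OF y this] have "y \<in> Iv k j" by (simp add: Iv_def)
  with j show "y \<in> \<Union>(Iv k ` Zk k T)" by blast
qed

lemma Rk_refl: "S \<subseteq> Rk \<omega> k S a a"
proof
  fix s assume s: "s \<in> S"
  let ?j = "s div LL^k"
  have sj: "s \<in> Iv k ?j" by (simp add: Iv_iff)
  then have j: "?j \<in> Zk k S" using s unfolding Zk_def by blast
  have "s \<in> Rset \<omega> (S \<inter> Iv k ?j) a a (?j * LL^k) ((?j+1) * LL^k)"
    using s sj unfolding Rset_def by (auto simp: Iv_def)
  with j show "s \<in> Rk \<omega> k S a a" unfolding Rk_def by blast
qed

lemma Rset_dep:
  assumes "\<And>e. edge_in_rect a b c d e \<Longrightarrow> \<omega> e = \<omega>' e"
  shows "Rset \<omega> S a b c d = Rset \<omega>' S a b c d"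
proof -
  have "open_step \<omega> a b c d = open_step \<omega>' a b c d"
    unfolding open_step_def using assms by (intro ext) blast
  then show ?thesis unfolding Rset_def by simp
qed

lemma Rk_dep:
  assumes "\<And>j e. j \<in> Zk k T \<Longrightarrow> edge_in_rect a b (j * LL^k) ((j+1) * LL^k) e \<Longrightarrow> \<omega> e = \<omega>' e"
  shows "Rk \<omega> k T a b = Rk \<omega>' k T a b"
  unfolding Rk_def using Rset_dep assms by (intro SUP_cong refl) blast

lemma glue:
  assumes T: "T \<subseteq> Rk \<omega> k T0 a b" and ab: "a \<le> b" and bc: "b \<le> c"
  shows "Rk \<omega> k T b c \<subseteq> Rk \<omega> k T0 a c"
proof
  fix y assume "y \<in> Rk \<omega> k T b c"
  then obtain j where j: "j \<in> Zk k T" and y: "y \<in> Rset \<omega> (T \<inter> Iv k j) b c (j * LL^k) ((j+1) * LL^k)"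
    unfolding Rk_def by blast
  from y obtain s where s: "s \<in> T \<inter> Iv k j" and yr: "y \<in> {j * LL^k..(j+1) * LL^k}"
    and p2': "(open_step \<omega> b c (j * LL^k) ((j+1) * LL^k))\<^sup>*\<^sup>* (b, s) (c, y)"
    unfolding Rset_def by blast
  from s T obtain j' where j': "j' \<in> Zk k T0" and s1: "s \<in> Rset \<omega> (T0 \<inter> Iv k j') a b (j' * LL^k) ((j'+1) * LL^k)"
    unfolding Rk_def by blast
  have "T0 \<inter> Iv k j' \<subseteq> {..<(j'+1) * LL^k}" by (auto simp: Iv_def)
  from Rset_range[OF s1 this] have "s \<in> Iv k j'" by (simp add: Iv_def)
  with s have jj: "j' = j" using Iv_unique by blast
  from s1 jj obtain s0 where s0: "s0 \<in> T0 \<inter> Iv k j"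
    and p1: "(open_step \<omega> a b (j * LL^k) ((j+1) * LL^k))\<^sup>*\<^sup>* (a, s0) (b, s)"
    unfolding Rset_def by blast
  have q1: "(open_step \<omega> a c (j * LL^k) ((j+1) * LL^k))\<^sup>*\<^sup>* (a, s0) (b, s)"
    by (rule path_mono[OF p1]) (use bc in auto)
  have q2: "(open_step \<omega> a c (j * LL^k) ((j+1) * LL^k))\<^sup>*\<^sup>* (b, s) (c, y)"
    by (rule path_mono[OF p2']) (use ab in auto)
  have "y \<in> Rset \<omega> (T0 \<inter> Iv k j) a c (j * LL^k) ((j+1) * LL^k)"
    unfolding Rset_def using s0 yr rtranclp_trans[OF q1 q2] by blast
  with j' jj show "y \<in> Rk \<omega> k T0 a c" unfolding Rk_def by blast
qed

lemma fractal_finite: "fractal xiy k S \<Longrightarrow> finite S"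
proof (induction k arbitrary: S)
  case 0 then show ?case by auto
next
  case (Suc k)
  from Suc.prems obtain Ss where S: "S = \<Union>(set Ss)" and F: "\<forall>T\<in>set Ss. fractal xiy k T" by auto
  have "finite (\<Union>(set Ss))"
  proof (rule finite_Union)
    show "finite (set Ss)" by simp
    fix M assume "M \<in> set Ss"
    then show "finite M" using F Suc.IH by blast
  qed
  then show ?case by (simp only: S)
qed



definition tgt :: "(int \<Rightarrow> nat) \<Rightarrow> (int \<Rightarrow> nat) \<Rightarrow> nat \<Rightarrow> int \<Rightarrow> int set \<Rightarrow> bool" where
  "tgt xix xiy k i T' = (if H xix k i = 0 then grouped k T' \<and> fractal xiy k T' else fractal xiy k T')"

definition Fev :: "(int \<Rightarrow> nat) \<Rightarrow> (int \<Rightarrow> nat) \<Rightarrow> nat \<Rightarrow> int \<Rightarrow> int set \<Rightarrow> (edge \<Rightarrow> bool) \<Rightarrow> bool" where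
  "Fev xix xiy k i T \<omega> = (\<not> (\<exists>T'. T' \<subseteq> Rk \<omega> k T (i * LL^k) ((i+1) * LL^k) \<and> tgt xix xiy k i T'))"

fun chain :: "(int \<Rightarrow> nat) \<Rightarrow> (int \<Rightarrow> nat) \<Rightarrow> nat \<Rightarrow> int \<Rightarrow> int set \<Rightarrow> (edge \<Rightarrow> bool) \<Rightarrow> nat \<Rightarrow> int set option" where
  "chain xix xiy k i0 S \<omega> 0 = Some S"
| "chain xix xiy k i0 S \<omega> (Suc t) = (case chain xix xiy k i0 S \<omega> t of None \<Rightarrow> None
     | Some T \<Rightarrow> if Fev xix xiy k (i0 + int t) T \<omega> then None
        else Some (SOME T'. T' \<subseteq> Rk \<omega> k T ((i0 + int t) * LL^k) ((i0 + int t + 1) * LL^k)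
                          \<and> tgt xix xiy k (i0 + int t) T'))"

definition Col :: "nat \<Rightarrow> int \<Rightarrow> int set \<Rightarrow> nat \<Rightarrow> edge set" where
  "Col k i0 S t = {e. \<exists>j\<in>Zk k S. edge_in_rect ((i0 + int t) * LL^k) ((i0 + int t + 1) * LL^k) (j * LL^k) ((j+1) * LL^k) e}"

lemma Col_fin: "finite S \<Longrightarrow> finite (Col k i0 S t)"
proof -
  assume S: "finite S"
  have "Col k i0 S t = (\<Union>j\<in>Zk k S. {e. edge_in_rect ((i0 + int t) * LL^k) ((i0 + int t + 1) * LL^k) (j * LL^k) ((j+1) * LL^k) e})"
    unfolding Col_def by blast
  then show ?thesis using finite_Zk[OF S] edge_fin by simp
qed

lemma Col_disj:
  assumes "t' < t"
  shows "Col k i0 S t \<inter> Col k i0 S t' = {}"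
proof (rule ccontr)
  assume "Col k i0 S t \<inter> Col k i0 S t' \<noteq> {}"
  then obtain e where e1: "e \<in> Col k i0 S t" and e2: "e \<in> Col k i0 S t'" by blast
  obtain x y dir where e: "e = ((x,y),dir)" by (metis prod.collapse)
  from e1 e edge_x have x1: "(i0 + int t) * LL^k \<le> x" unfolding Col_def by blast
  from e2 e edge_x have x2: "x < (i0 + int t' + 1) * LL^k" unfolding Col_def by blast
  have "(i0 + int t' + 1) * LL^k \<le> (i0 + int t) * LL^k"
    using assms LLk_pos[of k] by (intro mult_right_mono) auto
  with x1 x2 show False by linarith
qed

lemma chain_step:
  assumes "chain xix xiy k i0 S \<omega> (Suc t) = Some T'"
  shows "\<exists>T. chain xix xiy k i0 S \<omega> t = Some T \<and> T' \<subseteq> Rk \<omega> k T ((i0 + int t) * LL^k) ((i0 + int t + 1) * LL^k)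
             \<and> tgt xix xiy k (i0 + int t) T'"
proof (cases "chain xix xiy k i0 S \<omega> t")
  case None
  then show ?thesis using assms by simp
next
  case (Some T)
  show ?thesis
  proof (cases "Fev xix xiy k (i0 + int t) T \<omega>")
    case True
    then show ?thesis using assms Some by simp
  next
    case False
    then have ex: "\<exists>T'. T' \<subseteq> Rk \<omega> k T ((i0 + int t) * LL^k) ((i0 + int t + 1) * LL^k) \<and> tgt xix xiy k (i0 + int t) T'"
      unfolding Fev_def by simp
    have "T' = (SOME T'. T' \<subseteq> Rk \<omega> k T ((i0 + int t) * LL^k) ((i0 + int t + 1) * LL^k) \<and> tgt xix xiy k (i0 + int t) T')"
      using assms Some False by simp
    with someI_ex[OF ex] Some show ?thesis by auto
  qed
qed

lemma chain_sub: "chain xix xiy k i0 S \<omega> t = Some T \<Longrightarrow> T \<subseteq> \<Union>(Iv k ` Zk k S)"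
proof (induction t arbitrary: T)
  case 0 then show ?case using self_sub by auto
next
  case (Suc t)
  from chain_step[OF Suc.prems] obtain T0 where T0: "chain xix xiy k i0 S \<omega> t = Some T0"
    and sub: "T \<subseteq> Rk \<omega> k T0 ((i0 + int t) * LL^k) ((i0 + int t + 1) * LL^k)" by blast
  have Z: "Zk k T0 \<subseteq> Zk k S" using Suc.IH[OF T0] by (rule Zk_sub)
  have "T \<subseteq> \<Union>(Iv k ` Zk k T0)" using sub Rk_sub by (rule subset_trans)
  also have "\<dots> \<subseteq> \<Union>(Iv k ` Zk k S)" using Z by (rule UN_mono) simp
  finally show ?case .
qed

lemma chain_inv:
  assumes fS: "fractal xiy k S"
  shows "chain xix xiy k i0 S \<omega> t = Some T \<Longrightarrow> fractal xiy k T \<and> T \<subseteq> Rk \<omega> k S (i0 * LL^k) ((i0 + int t) * LL^k)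
      \<and> ((\<exists>t'<t. H xix k (i0 + int t') = 0) \<longrightarrow> grouped k T)"
proof (induction t arbitrary: T)
  case 0 then show ?case using fS Rk_refl by auto
next
  case (Suc t)
  from chain_step[OF Suc.prems] obtain T0 where T0: "chain xix xiy k i0 S \<omega> t = Some T0"
    and sub: "T \<subseteq> Rk \<omega> k T0 ((i0 + int t) * LL^k) ((i0 + int t + 1) * LL^k)"
    and tg: "tgt xix xiy k (i0 + int t) T" by blast
  note IH = Suc.IH[OF T0]
  have L: "(0::int) < LL^k" by (rule LLk_pos)
  have fT: "fractal xiy k T" using tg unfolding tgt_def by (auto split: if_splits)
  have le1: "i0 * LL^k \<le> (i0 + int t) * LL^k" using L by (intro mult_right_mono) auto
  have le2: "(i0 + int t) * LL^k \<le> (i0 + int t + 1) * LL^k" using L by (intro mult_right_mono) auto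
  have "Rk \<omega> k T0 ((i0 + int t) * LL^k) ((i0 + int t + 1) * LL^k) \<subseteq> Rk \<omega> k S (i0 * LL^k) ((i0 + int t + 1) * LL^k)"
    using IH le1 le2 by (intro glue) auto
  with sub have R0: "T \<subseteq> Rk \<omega> k S (i0 * LL^k) ((i0 + int t + 1) * LL^k)" by (rule subset_trans)
  have e: "i0 + int (Suc t) = i0 + int t + 1" by simp
  have R: "T \<subseteq> Rk \<omega> k S (i0 * LL^k) ((i0 + int (Suc t)) * LL^k)" using R0 by (simp only: e)
  have G: "grouped k T" if ex: "\<exists>t'<Suc t. H xix k (i0 + int t') = 0"
  proof (cases "H xix k (i0 + int t) = 0")
    case True
    then show ?thesis using tg unfolding tgt_def by simp
  next
    case False
    with ex have "\<exists>t'<t. H xix k (i0 + int t') = 0" using less_Suc_eq by auto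
    with IH have "grouped k T0" by blast
    then obtain j where j: "T0 \<subseteq> Iv k j" unfolding grouped_def by blast
    then have "Zk k T0 \<subseteq> {j}" by (intro Zk_sub) auto
    moreover have "T \<subseteq> \<Union>(Iv k ` Zk k T0)" using sub Rk_sub by (rule subset_trans)
    ultimately have "T \<subseteq> Iv k j" by blast
    then show ?thesis unfolding grouped_def by blast
  qed
  show ?case using fT R G by blast
qed

lemma chain_dep:
  assumes "\<And>e. e \<in> (\<Union>t'<t. Col k i0 S t') \<Longrightarrow> \<omega> e = \<omega>' e"
  shows "chain xix xiy k i0 S \<omega> t = chain xix xiy k i0 S \<omega>' t"
  using assms
proof (induction t)
  case 0 then show ?case by simp
next
  case (Suc t)
  have eq: "chain xix xiy k i0 S \<omega> t = chain xix xiy k i0 S \<omega>' t"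
  proof (rule Suc.IH)
    fix e assume "e \<in> (\<Union>t'<t. Col k i0 S t')"
    then have "e \<in> (\<Union>t'<Suc t. Col k i0 S t')" by auto
    then show "\<omega> e = \<omega>' e" by (rule Suc.prems)
  qed
  show ?case
  proof (cases "chain xix xiy k i0 S \<omega> t")
    case None then show ?thesis using eq by simp
  next
    case (Some T)
    have Z: "Zk k T \<subseteq> Zk k S" using chain_sub[OF Some] by (rule Zk_sub)
    have R: "Rk \<omega> k T ((i0 + int t) * LL^k) ((i0 + int t + 1) * LL^k) = Rk \<omega>' k T ((i0 + int t) * LL^k) ((i0 + int t + 1) * LL^k)"
    proof (rule Rk_dep)
      fix j e assume j: "j \<in> Zk k T" and e: "edge_in_rect ((i0 + int t) * LL^k) ((i0 + int t + 1) * LL^k) (j * LL^k) ((j+1) * LL^k) e"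
      then have "e \<in> Col k i0 S t" using Z unfolding Col_def by blast
      then have "e \<in> (\<Union>t'<Suc t. Col k i0 S t')" by blast
      then show "\<omega> e = \<omega>' e" by (rule Suc.prems)
    qed
    show ?thesis using Some eq R by (simp add: Fev_def)
  qed
qed

lemma Fev_dep:
  assumes T: "T \<subseteq> \<Union>(Iv k ` Zk k S)" and ag: "\<And>e. e \<in> Col k i0 S t \<Longrightarrow> \<omega> e = \<omega>' e"
  shows "Fev xix xiy k (i0 + int t) T \<omega> = Fev xix xiy k (i0 + int t) T \<omega>'"
proof -
  have Z: "Zk k T \<subseteq> Zk k S" using T by (rule Zk_sub)
  have R: "Rk \<omega> k T ((i0 + int t) * LL^k) ((i0 + int t + 1) * LL^k) = Rk \<omega>' k T ((i0 + int t) * LL^k) ((i0 + int t + 1) * LL^k)"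
  proof (rule Rk_dep)
    fix j e assume j: "j \<in> Zk k T" and e: "edge_in_rect ((i0 + int t) * LL^k) ((i0 + int t + 1) * LL^k) (j * LL^k) ((j+1) * LL^k) e"
    then have "e \<in> Col k i0 S t" using Z unfolding Col_def by blast
    then show "\<omega> e = \<omega>' e" by (rule ag)
  qed
  then show ?thesis by (simp add: Fev_def)
qed

lemma chain_none:
  "chain xix xiy k i0 S \<omega> n = None \<Longrightarrow> \<exists>t<n. chain xix xiy k i0 S \<omega> t \<noteq> None \<and> chain xix xiy k i0 S \<omega> (Suc t) = None"
proof (induction n)
  case 0 then show ?case by simp
next
  case (Suc n)
  show ?case
  proof (cases "chain xix xiy k i0 S \<omega> n = None")
    case True
    with Suc.IH show ?thesis using less_Suc_eq by blast
  next
    case False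
    with Suc.prems show ?thesis by blast
  qed
qed



lemma Pperc_mono:
  assumes "\<And>\<omega>. E1 \<omega> \<Longrightarrow> E2 \<omega>" and "{\<omega> \<in> space (perc xix xiy p). E2 \<omega>} \<in> sets (perc xix xiy p)"
  shows "Pperc xix xiy p E1 \<le> Pperc xix xiy p E2"
proof -
  interpret PS: prob_space "perc xix xiy p" by (rule perc_prob)
  show ?thesis unfolding Pperc_def
    by (rule PS.finite_measure_mono) (use assms in auto)
qed

lemma u_upper:
  assumes "fractal xiy k T" "H xix k i = 0"
  shows "Pperc xix xiy p (\<lambda>\<omega>. \<not> (\<exists>T'. T' \<subseteq> Rk \<omega> k T (i * LL^k) ((i+1) * LL^k) \<and> grouped k T' \<and> fractal xiy k T')) \<le> u k p"
  unfolding u_def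
proof (rule cSup_upper)
  show "Pperc xix xiy p (\<lambda>\<omega>. \<not> (\<exists>T'. T' \<subseteq> Rk \<omega> k T (i * LL^k) ((i+1) * LL^k) \<and> grouped k T' \<and> fractal xiy k T'))
    \<in> {Pperc xix xiy p (\<lambda>\<omega>. \<not> (\<exists>T. T \<subseteq> Rk \<omega> k S (i * LL^k) ((i+1) * LL^k) \<and> grouped k T \<and> fractal xiy k T))
               | xix xiy S i. fractal xiy k S \<and> H xix k i = 0}"
    using assms by blast
  show "bdd_above {Pperc xix xiy p (\<lambda>\<omega>. \<not> (\<exists>T. T \<subseteq> Rk \<omega> k S (i * LL^k) ((i+1) * LL^k) \<and> grouped k T \<and> fractal xiy k T))
               | xix xiy S i. fractal xiy k S \<and> H xix k i = 0}"
    by (rule bdd_aboveI[of _ 1]) (auto intro: Pperc_le1)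
qed

lemma v_upper:
  assumes "fractal xiy k T" "H xix k i = 1"
  shows "Pperc xix xiy p (\<lambda>\<omega>. \<not> (\<exists>T'. T' \<subseteq> Rk \<omega> k T (i * LL^k) ((i+1) * LL^k) \<and> fractal xiy k T')) \<le> v k p"
  unfolding v_def
proof (rule cSup_upper)
  have ko: "k_ordered k [T]" unfolding k_ordered_def by simp
  show "Pperc xix xiy p (\<lambda>\<omega>. \<not> (\<exists>T'. T' \<subseteq> Rk \<omega> k T (i * LL^k) ((i+1) * LL^k) \<and> fractal xiy k T'))
    \<in> {Pperc xix xiy p (\<lambda>\<omega>. \<not> (\<exists>T. T \<subseteq> Rk \<omega> k S (i * LL^k) ((i+1) * LL^k)
                                          \<and> fractal xiy k T))
               | xix xiy S i h Ss. h \<ge> 1 \<and> H xix k i = h \<and> length Ss = 2^(4*(h-1))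
                   \<and> k_ordered k Ss \<and> (\<forall>T\<in>set Ss. fractal xiy k T) \<and> S = \<Union>(set Ss)}"
    apply (rule CollectI)
    apply (rule exI[of _ xix], rule exI[of _ xiy], rule exI[of _ T], rule exI[of _ i], rule exI[of _ 1], rule exI[of _ "[T]"])
    using assms ko by simp
  show "bdd_above {Pperc xix xiy p (\<lambda>\<omega>. \<not> (\<exists>T. T \<subseteq> Rk \<omega> k S (i * LL^k) ((i+1) * LL^k)
                                          \<and> fractal xiy k T))
               | xix xiy S i h Ss. h \<ge> 1 \<and> H xix k i = h \<and> length Ss = 2^(4*(h-1))
                   \<and> k_ordered k Ss \<and> (\<forall>T\<in>set Ss. fractal xiy k T) \<and> S = \<Union>(set Ss)}"
    by (rule bdd_aboveI[of _ 1]) (auto intro: Pperc_le1)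
qed

lemma Fev_bound:
  assumes "fractal xiy k T" "H xix k i \<le> 1"
  shows "Pperc xix xiy p (Fev xix xiy k i T) \<le> max (u k p) (v k p)"
proof (cases "H xix k i = 0")
  case True
  have "Fev xix xiy k i T = (\<lambda>\<omega>. \<not> (\<exists>T'. T' \<subseteq> Rk \<omega> k T (i * LL^k) ((i+1) * LL^k) \<and> grouped k T' \<and> fractal xiy k T'))"
    using True by (simp add: Fev_def tgt_def fun_eq_iff)
  then show ?thesis using u_upper[OF assms(1) True, of p] by (simp add: le_max_iff_disj)
next
  case False
  then have H1: "H xix k i = 1" using assms(2) by simp
  have "Fev xix xiy k i T = (\<lambda>\<omega>. \<not> (\<exists>T'. T' \<subseteq> Rk \<omega> k T (i * LL^k) ((i+1) * LL^k) \<and> fractal xiy k T'))"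
    using False by (simp add: Fev_def tgt_def fun_eq_iff)
  then show ?thesis using v_upper[OF assms(1) H1, of p] by (simp add: le_max_iff_disj)
qed



lemma main_bound:
  assumes fS: "fractal xiy k S" and Hle: "\<And>t. t < n \<Longrightarrow> H xix k (i0 + int t) \<le> 1" and n: "0 < n"
  shows "Pperc xix xiy p (\<lambda>\<omega>. chain xix xiy k i0 S \<omega> n = None) \<le> real n * max (u k p) (v k p)"
proof -
  define m where "m = max (u k p) (v k p)"
  define YS where "YS = \<Union>(Iv k ` Zk k S)"
  define Pre where "Pre t = (\<Union>t'<t. Col k i0 S t')" for t
  let ?ch = "chain xix xiy k i0 S"
  let ?M = "perc xix xiy p"
  interpret PS: prob_space ?M by (rule perc_prob)
  have finS: "finite S" by (rule fractal_finite[OF fS])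
  have finYS: "finite YS" unfolding YS_def
    using finite_Zk[OF finS] by (intro finite_UN_I) (auto simp: Iv_def)
  have finCol: "finite (Col k i0 S t)" for t using Col_fin[OF finS] .
  have finPre: "finite (Pre t)" for t unfolding Pre_def using finCol by auto
  have disjPC: "Pre t \<inter> Col k i0 S t = {}" for t
    unfolding Pre_def using Col_disj by blast
  have PreSuc: "Pre (Suc t) = Pre t \<union> Col k i0 S t" for t
    unfolding Pre_def by (auto simp: lessThan_Suc)
  have depch: "?ch \<omega> t = ?ch \<omega>' t" if "\<And>e. e \<in> Pre t \<Longrightarrow> \<omega> e = \<omega>' e" for \<omega> \<omega>' t
    by (rule chain_dep) (use that in \<open>auto simp: Pre_def\<close>)
  have measch: "{\<omega> \<in> space ?M. E (?ch \<omega> t)} \<in> sets ?M" for E t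
    by (rule perc_meas[OF finPre[of t]]) (metis depch)
  have m0: "0 \<le> m"
    using Fev_bound[OF fS Hle[OF n], of p] Pperc_ge0[of xix xiy p "Fev xix xiy k (i0 + int 0) S"] unfolding m_def
    by linarith
  define C where "C t = {\<omega> \<in> space ?M. ?ch \<omega> t \<noteq> None \<and> ?ch \<omega> (Suc t) = None}" for t
  have Cmeas: "C t \<in> sets ?M" for t
  proof -
    have "C t = {\<omega> \<in> space ?M. (\<lambda>x. x \<noteq> None) (?ch \<omega> t)} \<inter> {\<omega> \<in> space ?M. (\<lambda>x. x = None) (?ch \<omega> (Suc t))}"
      unfolding C_def by auto
    also have "\<dots> \<in> sets ?M" by (rule sets.Int; rule measch)
    finally show ?thesis .
  qed
  have step: "measure ?M (C t) \<le> m" if tn: "t < n" for t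
  proof -
    define A where "A T = {\<omega> \<in> space ?M. ?ch \<omega> t = Some T \<and> Fev xix xiy k (i0 + int t) T \<omega>}" for T
    define B where "B T = {\<omega> \<in> space ?M. ?ch \<omega> t = Some T}" for T
    have eq: "C t = (\<Union>T\<in>Pow YS. A T)"
    proof
      show "C t \<subseteq> (\<Union>T\<in>Pow YS. A T)"
      proof
        fix \<omega> assume "\<omega> \<in> C t"
        then obtain T where sp: "\<omega> \<in> space ?M" and T: "?ch \<omega> t = Some T" and N: "?ch \<omega> (Suc t) = None"
          unfolding C_def by auto
        have "T \<in> Pow YS" using chain_sub[OF T] unfolding YS_def by simp
        moreover have "Fev xix xiy k (i0 + int t) T \<omega>" using T N by (auto split: if_splits)
        ultimately show "\<omega> \<in> (\<Union>T\<in>Pow YS. A T)" unfolding A_def using sp T by blast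
      qed
      show "(\<Union>T\<in>Pow YS. A T) \<subseteq> C t"
        unfolding A_def C_def by auto
    qed
    have Bmeas: "B T \<in> sets ?M" for T unfolding B_def using measch[of "\<lambda>x. x = Some T"] by simp
    have Ameas: "A T \<in> sets ?M" if "T \<in> Pow YS" for T
      unfolding A_def
    proof (rule perc_meas[OF finPre[of "Suc t"]])
      fix \<omega> \<omega>' :: "edge \<Rightarrow> bool" assume ag: "\<And>e. e \<in> Pre (Suc t) \<Longrightarrow> \<omega> e = \<omega>' e"
      have "?ch \<omega> t = ?ch \<omega>' t" by (rule depch) (use ag PreSuc in auto)
      moreover have "Fev xix xiy k (i0 + int t) T \<omega> = Fev xix xiy k (i0 + int t) T \<omega>'"
        by (rule Fev_dep) (use that ag PreSuc YS_def in auto)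
      ultimately show "(?ch \<omega> t = Some T \<and> Fev xix xiy k (i0 + int t) T \<omega>) =
                       (?ch \<omega>' t = Some T \<and> Fev xix xiy k (i0 + int t) T \<omega>')" by simp
    qed
    have Adisj: "disjoint_family_on A (Pow YS)"
      unfolding disjoint_family_on_def A_def by auto
    have Bdisj: "disjoint_family_on B (Pow YS)"
      unfolding disjoint_family_on_def B_def by auto
    have AB: "measure ?M (A T) \<le> measure ?M (B T) * m" if T: "T \<in> Pow YS" for T
    proof -
      have "measure ?M (A T) = Pperc xix xiy p (\<lambda>\<omega>. ?ch \<omega> t = Some T \<and> Fev xix xiy k (i0 + int t) T \<omega>)"
        unfolding A_def Pperc_def by simp
      also have "\<dots> = Pperc xix xiy p (\<lambda>\<omega>. ?ch \<omega> t = Some T) * Pperc xix xiy p (Fev xix xiy k (i0 + int t) T)"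
      proof (rule perc_indep[OF finPre[of t] finCol[of t] disjPC[of t]])
        fix \<omega> \<omega>' :: "edge \<Rightarrow> bool" assume "\<And>e. e \<in> Pre t \<Longrightarrow> \<omega> e = \<omega>' e"
        then show "(?ch \<omega> t = Some T) = (?ch \<omega>' t = Some T)" using depch by metis
      next
        fix \<omega> \<omega>' :: "edge \<Rightarrow> bool" assume "\<And>e. e \<in> Col k i0 S t \<Longrightarrow> \<omega> e = \<omega>' e"
        then show "Fev xix xiy k (i0 + int t) T \<omega> = Fev xix xiy k (i0 + int t) T \<omega>'"
          by (intro Fev_dep) (use T YS_def in auto)
      qed
      also have "\<dots> \<le> Pperc xix xiy p (\<lambda>\<omega>. ?ch \<omega> t = Some T) * m"
      proof (cases "\<exists>\<omega>. ?ch \<omega> t = Some T")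
        case True
        then obtain \<omega> where "?ch \<omega> t = Some T" by blast
        then have "fractal xiy k T" using chain_inv[OF fS] by blast
        then have "Pperc xix xiy p (Fev xix xiy k (i0 + int t) T) \<le> m"
          unfolding m_def by (rule Fev_bound) (rule Hle[OF tn])
        then show ?thesis by (intro mult_left_mono Pperc_ge0)
      next
        case False
        then have "Pperc xix xiy p (\<lambda>\<omega>. ?ch \<omega> t = Some T) = 0" unfolding Pperc_def by simp
        then show ?thesis by simp
      qed
      also have "\<dots> = measure ?M (B T) * m" unfolding B_def Pperc_def by simp
      finally show ?thesis .
    qed
    have "measure ?M (C t) = (\<Sum>T\<in>Pow YS. measure ?M (A T))"
      unfolding eq using finYS Ameas Adisj by (intro PS.finite_measure_finite_Union) auto
    also have "\<dots> \<le> (\<Sum>T\<in>Pow YS. measure ?M (B T) * m)"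
      by (rule sum_mono) (rule AB)
    also have "\<dots> = measure ?M (\<Union>T\<in>Pow YS. B T) * m"
      using finYS Bmeas Bdisj by (subst PS.finite_measure_finite_Union) (auto simp: sum_distrib_right)
    also have "\<dots> \<le> 1 * m"
      using m0 by (intro mult_right_mono PS.prob_le_1)
    finally show ?thesis by simp
  qed
  have "Pperc xix xiy p (\<lambda>\<omega>. ?ch \<omega> n = None) = measure ?M {\<omega> \<in> space ?M. ?ch \<omega> n = None}"
    unfolding Pperc_def by (rule refl)
  also have "\<dots> \<le> measure ?M (\<Union>t\<in>{..<n}. C t)"
  proof (rule PS.finite_measure_mono)
    show "{\<omega> \<in> space ?M. ?ch \<omega> n = None} \<subseteq> (\<Union>t\<in>{..<n}. C t)"
    proof
      fix \<omega> assume "\<omega> \<in> {\<omega> \<in> space ?M. ?ch \<omega> n = None}"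
      then have sp: "\<omega> \<in> space ?M" and N: "?ch \<omega> n = None" by auto
      from chain_none[OF N] obtain t where "t < n" "?ch \<omega> t \<noteq> None" "?ch \<omega> (Suc t) = None" by blast
      then show "\<omega> \<in> (\<Union>t\<in>{..<n}. C t)" unfolding C_def using sp by blast
    qed
    show "(\<Union>t\<in>{..<n}. C t) \<in> sets ?M" using Cmeas by auto
  qed
  also have "\<dots> \<le> (\<Sum>t\<in>{..<n}. measure ?M (C t))"
    using Cmeas by (intro PS.finite_measure_subadditive_finite) auto
  also have "\<dots> \<le> (\<Sum>t\<in>{..<n}. m)"
    by (rule sum_mono) (rule step, simp)
  also have "\<dots> = real n * m" by simp
  finally show ?thesis unfolding m_def .
qed



lemma chain_meas:
  assumes fS: "fractal xiy k S"
  shows "{\<omega> \<in> space (perc xix xiy p). E (chain xix xiy k i0 S \<omega> t)} \<in> sets (perc xix xiy p)"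
proof (rule perc_meas)
  have finS: "finite S" by (rule fractal_finite[OF fS])
  show "finite (\<Union>t'<t. Col k i0 S t')" using Col_fin[OF finS] by auto
  fix \<omega> \<omega>' :: "edge \<Rightarrow> bool" assume "\<And>e. e \<in> (\<Union>t'<t. Col k i0 S t') \<Longrightarrow> \<omega> e = \<omega>' e"
  then have "chain xix xiy k i0 S \<omega> t = chain xix xiy k i0 S \<omega>' t" by (rule chain_dep)
  then show "E (chain xix xiy k i0 S \<omega> t) = E (chain xix xiy k i0 S \<omega>' t)" by simp
qed

theorem lemma5p1:
  fixes k :: nat and p :: real and xix xiy :: "int \<Rightarrow> nat"
  assumes "0 \<le> p" and "p \<le> 1"
  shows
   "(\<forall>i0 i1 j S. i0 \<le> i1 \<longrightarrow> H xiy k j = 0 \<longrightarrow> (\<Sum>i\<in>{i0..i1}. H xix k i) \<le> 1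
       \<longrightarrow> fractal xiy k S \<longrightarrow> S \<subseteq> Iv k j \<longrightarrow>
       Pperc xix xiy p (\<lambda>\<omega>. \<not> (\<exists>T. T \<subseteq> Rk \<omega> k S (i0 * LL^k) ((i1+1) * LL^k) \<and> fractal xiy k T))
         \<le> real_of_int (i1 - i0 + 1) * max (u k p) (v k p))
  \<and> (\<forall>i0 i1 S. i1 - i0 \<ge> 1 \<longrightarrow> (\<Sum>i\<in>{i0..i1}. H xix k i) \<le> 1 \<longrightarrow> fractal xiy k S \<longrightarrow>
       Pperc xix xiy p (\<lambda>\<omega>. \<not> (\<exists>T. T \<subseteq> Rk \<omega> k S (i0 * LL^k) ((i1+1) * LL^k)
                                   \<and> grouped k T \<and> fractal xiy k T))
         \<le> real_of_int (i1 - i0 + 1) * max (u k p) (v k p))"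
proof (intro conjI allI impI)
  fix i0 i1 j :: int and S :: "int set"
  assume i01: "i0 \<le> i1" and sum: "(\<Sum>i\<in>{i0..i1}. H xix k i) \<le> 1" and fS: "fractal xiy k S"
  define n where "n = nat (i1 - i0 + 1)"
  have n0: "0 < n" using i01 by (simp add: n_def)
  have ni: "i0 + int n = i1 + 1" using i01 by (simp add: n_def)
  have Hle: "H xix k (i0 + int t) \<le> 1" if "t < n" for t
  proof -
    have mem: "i0 + int t \<in> {i0..i1}" using that ni by auto
    have "H xix k (i0 + int t) \<le> (\<Sum>i\<in>{i0..i1}. H xix k i)" by (rule member_le_sum[OF mem]) auto
    with sum show ?thesis by simp
  qed
  have "Pperc xix xiy p (\<lambda>\<omega>. \<not> (\<exists>T. T \<subseteq> Rk \<omega> k S (i0 * LL^k) ((i1+1) * LL^k) \<and> fractal xiy k T))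
      \<le> Pperc xix xiy p (\<lambda>\<omega>. chain xix xiy k i0 S \<omega> n = None)"
  proof (rule Pperc_mono)
    fix \<omega> assume nf: "\<not> (\<exists>T. T \<subseteq> Rk \<omega> k S (i0 * LL^k) ((i1+1) * LL^k) \<and> fractal xiy k T)"
    show "chain xix xiy k i0 S \<omega> n = None"
    proof (rule ccontr)
      assume "chain xix xiy k i0 S \<omega> n \<noteq> None"
      then obtain T where T: "chain xix xiy k i0 S \<omega> n = Some T" by auto
      from chain_inv[OF fS T] have "fractal xiy k T" "T \<subseteq> Rk \<omega> k S (i0 * LL^k) ((i0 + int n) * LL^k)" by auto
      with ni nf show False by auto
    qed
  next
    show "{\<omega> \<in> space (perc xix xiy p). chain xix xiy k i0 S \<omega> n = None} \<in> sets (perc xix xiy p)"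
      by (rule chain_meas[OF fS])
  qed
  also have "\<dots> \<le> real n * max (u k p) (v k p)" by (rule main_bound[OF fS Hle n0])
  also have "real n = real_of_int (i1 - i0 + 1)" using i01 by (simp add: n_def)
  finally show "Pperc xix xiy p (\<lambda>\<omega>. \<not> (\<exists>T. T \<subseteq> Rk \<omega> k S (i0 * LL^k) ((i1+1) * LL^k) \<and> fractal xiy k T))
         \<le> real_of_int (i1 - i0 + 1) * max (u k p) (v k p)" .
next
  fix i0 i1 :: int and S :: "int set"
  assume i01': "1 \<le> i1 - i0" and sum: "(\<Sum>i\<in>{i0..i1}. H xix k i) \<le> 1" and fS: "fractal xiy k S"
  have i01: "i0 \<le> i1" using i01' by simp
  define n where "n = nat (i1 - i0 + 1)"
  have n0: "0 < n" using i01 by (simp add: n_def)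
  have n2: "1 < n" using i01' by (simp add: n_def)
  have ni: "i0 + int n = i1 + 1" using i01 by (simp add: n_def)
  have Hle: "H xix k (i0 + int t) \<le> 1" if "t < n" for t
  proof -
    have mem: "i0 + int t \<in> {i0..i1}" using that ni by auto
    have "H xix k (i0 + int t) \<le> (\<Sum>i\<in>{i0..i1}. H xix k i)" by (rule member_le_sum[OF mem]) auto
    with sum show ?thesis by simp
  qed
  have good: "\<exists>t'<n. H xix k (i0 + int t') = 0"
  proof (rule ccontr)
    assume "\<not> (\<exists>t'<n. H xix k (i0 + int t') = 0)"
    then have h0: "H xix k i0 \<noteq> 0" and h1: "H xix k (i0 + 1) \<noteq> 0" using n0 n2
      by (metis add.right_neutral of_nat_0, metis of_nat_1)
    have "(\<Sum>i\<in>{i0, i0+1}. H xix k i) \<le> (\<Sum>i\<in>{i0..i1}. H xix k i)"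
      by (rule sum_mono2) (use i01' in auto)
    moreover have "(\<Sum>i\<in>{i0, i0+1}. H xix k i) = H xix k i0 + H xix k (i0+1)" by simp
    ultimately show False using sum h0 h1 by linarith
  qed
  have "Pperc xix xiy p (\<lambda>\<omega>. \<not> (\<exists>T. T \<subseteq> Rk \<omega> k S (i0 * LL^k) ((i1+1) * LL^k) \<and> grouped k T \<and> fractal xiy k T))
      \<le> Pperc xix xiy p (\<lambda>\<omega>. chain xix xiy k i0 S \<omega> n = None)"
  proof (rule Pperc_mono)
    fix \<omega> assume nf: "\<not> (\<exists>T. T \<subseteq> Rk \<omega> k S (i0 * LL^k) ((i1+1) * LL^k) \<and> grouped k T \<and> fractal xiy k T)"
    show "chain xix xiy k i0 S \<omega> n = None"
    proof (rule ccontr)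
      assume "chain xix xiy k i0 S \<omega> n \<noteq> None"
      then obtain T where T: "chain xix xiy k i0 S \<omega> n = Some T" by auto
      from chain_inv[OF fS T] good have "fractal xiy k T" "grouped k T" "T \<subseteq> Rk \<omega> k S (i0 * LL^k) ((i0 + int n) * LL^k)" by auto
      with ni nf show False by auto
    qed
  next
    show "{\<omega> \<in> space (perc xix xiy p). chain xix xiy k i0 S \<omega> n = None} \<in> sets (perc xix xiy p)"
      by (rule chain_meas[OF fS])
  qed
  also have "\<dots> \<le> real n * max (u k p) (v k p)" by (rule main_bound[OF fS Hle n0])
  also have "real n = real_of_int (i1 - i0 + 1)" using i01 by (simp add: n_def)
  finally show "Pperc xix xiy p (\<lambda>\<omega>. \<not> (\<exists>T. T \<subseteq> Rk \<omega> k S (i0 * LL^k) ((i1+1) * LL^k) \<and> grouped k T \<and> fractal xiy k T))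
         \<le> real_of_int (i1 - i0 + 1) * max (u k p) (v k p)" .
qed


end
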